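(* Let $\zeta\in\mathcal{PMF}(S)$ and suppose there exist a sequence $(\xi_k)$ in $\mathcal{PMF}(S)$ converging to $\zeta$ and constants $N_0>0$, $a>0$, $b>0$ such that for every $k$ and every $0<N\le N_0$, $$aN^{h/2}\le\nu(\{\eta\in\mathcal{PMF}(S):i(\eta,\xi_k)\le N\})\le bN^{h/2}.$$ Then there exist $N_1\in(0,N_0]$, $A>0$, $B>0$ and $D_1,D_2\in\mathbb R$ such that for all $0<N\le N_1$, $$-A\ln N+D_1\le\Psi(\zeta)_{\ge N}\le -B\ln N+D_2,$$ where $\Psi(\zeta)_{\ge N}=\int_{\{\eta\in\mathcal{PMF}(S):i(\zeta,\eta)\ge N\}}i(\zeta,\eta)^{-h/2}\,d\nu(\eta)$.
   Context: $S$ is a closed connected orientable surface of genus $g\ge2$, $h=6g-6$, $\mathcal T(S)$ its Teichmüller space with base point $o$. $\mathcal{MF}(S)$ is the space of measured foliations, $\mathcal{PMF}(S)$ its projectivization, $i(\cdot,\cdot)$ the continuous geometric intersection number, $\mathrm{Ext}_o$ the extremal length at $o$, $\nu_{Th}$ the Thurston measure. Points of $\mathcal{PMF}(S)$ are identified with their representatives $\xi$ satisfying $\mathrm{Ext}_o(\xi)=1$ (so $i$ becomes a continuous function on $\mathcal{PMF}(S)\times\mathcal{PMF}(S)$), and $\nu$ is the probability measure on $\mathcal{PMF}(S)$ proportional to $A\mapsto\nu_{Th}(\{t\xi:\xi\in A,0\le t\le1\})$. *)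

theory Defs
  imports "HOL-Probability.Probability"
begin

text \<open>Abstract model of (PMF(S), i, nu). P is the carrier (normalized representatives
  with Ext_o = 1), i the continuous, symmetric, nonnegative intersection pairing on P,
  nu a Borel probability measure on P.\<close>

definition pmf_intersection_data ::
  "'a::metric_space set \<Rightarrow> ('a \<Rightarrow> 'a \<Rightarrow> real) \<Rightarrow> 'a measure \<Rightarrow> bool" where
  "pmf_intersection_data P i \<nu> \<longleftrightarrow>
     compact P \<and> P \<noteq> {} \<and>
     continuous_on (P \<times> P) (\<lambda>(x, y). i x y) \<and>
     (\<forall>x\<in>P. \<forall>y\<in>P. i x y = i y x) \<and>
     (\<forall>x\<in>P. \<forall>y\<in>P. 0 \<le> i x y) \<and>
     prob_space \<nu> \<and> space \<nu> = P \<and> sets \<nu> = sets (restrict_space borel P)"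

definition Psi_ge :: "'a measure \<Rightarrow> ('a \<Rightarrow> 'a \<Rightarrow> real) \<Rightarrow> nat \<Rightarrow> 'a \<Rightarrow> real \<Rightarrow> real" where
  "Psi_ge \<nu> i h \<zeta> N =
     (\<integral>\<eta>. indicator {\<eta> \<in> space \<nu>. N \<le> i \<zeta> \<eta>} \<eta> * (i \<zeta> \<eta>) powr (- (real h / 2)) \<partial>\<nu>)"

end

theory Submission
  imports Defs
begin


lemma Fbd_lemma:
  fixes P :: "'a::metric_space set" and i :: "'a \<Rightarrow> 'a \<Rightarrow> real" and \<nu> :: "'a measure"
  assumes pd: "pmf_intersection_data P i \<nu>"
    and "\<zeta> \<in> P" and xiP: "\<And>k. \<xi> k \<in> P" and lim: "\<xi> \<longlonglongrightarrow> \<zeta>"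
    and m: "m > 0"
    and hyp: "\<And>k N. 0 < N \<Longrightarrow> N \<le> N0 \<Longrightarrow>
           a * N powr m \<le> measure \<nu> {\<eta> \<in> P. i \<eta> (\<xi> k) \<le> N} \<and>
           measure \<nu> {\<eta> \<in> P. i \<eta> (\<xi> k) \<le> N} \<le> b * N powr m"
    and t: "0 < t" "t < N0"
  shows "a * t powr m \<le> measure \<nu> {\<eta> \<in> P. i \<eta> \<zeta> \<le> t} \<and> measure \<nu> {\<eta> \<in> P. i \<eta> \<zeta> \<le> t} \<le> b * t powr m"
proof -
  from pd have cP: "compact P" and cont: "continuous_on (P \<times> P) (\<lambda>(x, y). i x y)"
    and ps: "prob_space \<nu>" and sp: "space \<nu> = P" and st: "sets \<nu> = sets (restrict_space borel P)"
    unfolding pmf_intersection_data_def by auto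
  interpret prob_space \<nu> by fact
  have uc: "uniformly_continuous_on (P \<times> P) (\<lambda>(x, y). i x y)"
    using compact_uniformly_continuous[OF cont] cP compact_Times by blast
  have key: "\<exists>k. \<forall>\<eta>\<in>P. \<bar>i \<eta> (\<xi> k) - i \<eta> \<zeta>\<bar> < e" if e: "e > 0" for e
  proof -
    obtain d where d: "d > 0" and dd: "\<And>x x'. x \<in> P\<times>P \<Longrightarrow> x' \<in> P\<times>P \<Longrightarrow> dist x' x < d \<Longrightarrow>
        dist ((\<lambda>(x, y). i x y) x') ((\<lambda>(x, y). i x y) x) < e"
      using uc e unfolding uniformly_continuous_on_def by metis
    obtain k where k: "dist (\<xi> k) \<zeta> < d"
      using lim d unfolding lim_sequentially by blast
    have "\<bar>i \<eta> (\<xi> k) - i \<eta> \<zeta>\<bar> < e" if "\<eta> \<in> P" for \<eta>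
    proof -
      have "dist (\<eta>, \<xi> k) (\<eta>, \<zeta>) < d" using k by (simp add: dist_Pair_Pair)
      then have "dist (i \<eta> (\<xi> k)) (i \<eta> \<zeta>) < e"
        using dd[of "(\<eta>, \<zeta>)" "(\<eta>, \<xi> k)"] that xiP assms(2) by auto
      then show ?thesis by (simp add: dist_real_def)
    qed
    then show ?thesis by blast
  qed
  have setsF: "{\<eta> \<in> P. i \<eta> c \<le> s} \<in> sets \<nu>" if "c \<in> P" for c s
  proof -
    have "continuous_on P (\<lambda>\<eta>. i \<eta> c)"
      by (rule continuous_on_compose2[OF cont, of _ "\<lambda>\<eta>. (\<eta>, c)", simplified])
         (auto intro!: continuous_intros simp: that)
    then have "(\<lambda>\<eta>. i \<eta> c) \<in> borel_measurable \<nu>"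
      using borel_measurable_continuous_on_restrict measurable_cong_sets st by blast
    then have "{\<eta> \<in> space \<nu>. i \<eta> c \<le> s} \<in> sets \<nu>" by measurable
    then show ?thesis using sp by simp
  qed
  define Ft where "Ft = measure \<nu> {\<eta> \<in> P. i \<eta> \<zeta> \<le> t}"
  have up: "Ft \<le> b * t powr m"
  proof (rule ccontr)
    assume nt: "\<not> ?thesis"
    have "((\<lambda>e. b * (t + e) powr m) \<longlongrightarrow> b * (t+0) powr m) (at_right 0)"
      using t by (intro tendsto_intros) auto
    then have "\<forall>\<^sub>F e in at_right 0. b * (t + e) powr m < Ft"
      using nt by (intro order_tendstoD(2)) auto
    moreover have "\<forall>\<^sub>F e in at_right 0. e < N0 - t"
      unfolding eventually_at_right_field using t by (intro exI[of _ "N0 - t"]) auto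
    moreover have "\<forall>\<^sub>F e in at_right (0::real). e > 0" by (rule eventually_at_right_less)
    ultimately have "\<forall>\<^sub>F e in at_right 0. b * (t + e) powr m < Ft \<and> e < N0 - t \<and> e > 0"
      by eventually_elim auto
    from eventually_happens'[OF trivial_limit_at_right_real this]
    obtain e where e: "b * (t + e) powr m < Ft" "e < N0 - t" "e > 0" by blast
    obtain k where k: "\<forall>\<eta>\<in>P. \<bar>i \<eta> (\<xi> k) - i \<eta> \<zeta>\<bar> < e" using key e by blast
    have "Ft \<le> measure \<nu> {\<eta> \<in> P. i \<eta> (\<xi> k) \<le> t + e}"
      unfolding Ft_def
    proof (intro finite_measure_mono setsF xiP subsetI)
      fix x assume "x \<in> {\<eta> \<in> P. i \<eta> \<zeta> \<le> t}"
      then show "x \<in> {\<eta> \<in> P. i \<eta> (\<xi> k) \<le> t + e}" using k by fastforce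
    qed
    also have "\<dots> \<le> b * (t + e) powr m" using hyp[of "t+e" k] e t by auto
    finally show False using e by simp
  qed
  have lo: "a * t powr m \<le> Ft"
  proof (rule ccontr)
    assume nt: "\<not> ?thesis"
    have "((\<lambda>e. a * (t - e) powr m) \<longlongrightarrow> a * (t-0) powr m) (at_right 0)"
      using t by (intro tendsto_intros) auto
    then have "\<forall>\<^sub>F e in at_right 0. a * (t - e) powr m > Ft"
      using nt by (intro order_tendstoD(1)) auto
    moreover have "\<forall>\<^sub>F e in at_right 0. e < t"
      unfolding eventually_at_right_field using t by (intro exI[of _ "t"]) auto
    moreover have "\<forall>\<^sub>F e in at_right (0::real). e > 0" by (rule eventually_at_right_less)
    ultimately have "\<forall>\<^sub>F e in at_right 0. a * (t - e) powr m > Ft \<and> e < t \<and> e > 0"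
      by eventually_elim auto
    from eventually_happens'[OF trivial_limit_at_right_real this]
    obtain e where e: "a * (t - e) powr m > Ft" "e < t" "e > 0" by blast
    obtain k where k: "\<forall>\<eta>\<in>P. \<bar>i \<eta> (\<xi> k) - i \<eta> \<zeta>\<bar> < e" using key e by blast
    have "a * (t - e) powr m \<le> measure \<nu> {\<eta> \<in> P. i \<eta> (\<xi> k) \<le> t - e}"
      using hyp[of "t-e" k] e t by auto
    also have "\<dots> \<le> Ft"
      unfolding Ft_def
    proof (intro finite_measure_mono setsF assms(2) subsetI)
      fix x assume "x \<in> {\<eta> \<in> P. i \<eta> (\<xi> k) \<le> t - e}"
      then show "x \<in> {\<eta> \<in> P. i \<eta> \<zeta> \<le> t}" using k by fastforce
    qed
    finally show False using e by simp
  qed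
  show ?thesis using up lo Ft_def by simp
qed


lemma psi_bounds:
  fixes \<nu> :: "'a measure" and g :: "'a \<Rightarrow> real"
  assumes ps: "prob_space \<nu>" and gm: "g \<in> borel_measurable \<nu>"
    and gnn: "\<And>x. x \<in> space \<nu> \<Longrightarrow> 0 \<le> g x"
    and m: "m \<ge> 1" and a: "a > 0" and b: "b > 0" and N0: "N0 > 0"
    and Fb: "\<And>t. 0 < t \<Longrightarrow> t < N0 \<Longrightarrow> a * t powr m \<le> measure \<nu> {x\<in>space \<nu>. g x \<le> t} \<and> measure \<nu> {x\<in>space \<nu>. g x \<le> t} \<le> b * t powr m"
  shows "\<exists>N1 A B D1 D2. 0 < N1 \<and> N1 \<le> N0 \<and> A > 0 \<and> B > 0 \<and>
           (\<forall>N. 0 < N \<and> N \<le> N1 \<longrightarrow>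
              - A * ln N + D1 \<le> (\<integral>x. indicator {x\<in>space \<nu>. N \<le> g x} x * g x powr (-m) \<partial>\<nu>) \<and>
              (\<integral>x. indicator {x\<in>space \<nu>. N \<le> g x} x * g x powr (-m) \<partial>\<nu>) \<le> - B * ln N + D2)"
proof -
  interpret prob_space \<nu> by fact
  define G where "G N x = indicator {x\<in>space \<nu>. N \<le> g x} x * g x powr (-m)" for N x
  define Psi where "Psi N = integral\<^sup>L \<nu> (G N)" for N
  define F where "F t = measure \<nu> {x\<in>space \<nu>. g x \<le> t}" for t
  define Fs where "Fs t = measure \<nu> {x\<in>space \<nu>. g x < t}" for t
  have Gnn: "0 \<le> G N x" for N x unfolding G_def by (auto simp: indicator_def)
  have Gbd: "G N x \<le> N powr (-m)" if "N > 0" "x \<in> space \<nu>" for N x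
    using that m by (auto simp: G_def indicator_def intro!: powr_mono2')
  have Gm: "G N \<in> borel_measurable \<nu>" for N unfolding G_def using gm by measurable
  have Gi: "integrable \<nu> (G N)" if "N > 0" for N
    by (rule integrable_const_bound[of _ "N powr (-m)"]) (use Gnn Gbd that Gm in auto)
  have indi: "integrable \<nu> (\<lambda>x. c * indicator S x)" if "S \<in> sets \<nu>" for c :: real and S
    using that by (intro integrable_mult_right integrable_real_indicator) (auto simp: emeasure_eq_measure)
  have indint: "integrable \<nu> (indicator S :: _ \<Rightarrow> real)" if "S \<in> sets \<nu>" for S
    using that by (intro integrable_real_indicator) (auto simp: emeasure_eq_measure)
  have Sle: "{x\<in>space \<nu>. g x \<le> t} \<in> sets \<nu>" for t using gm by measurable
  have Slt: "{x\<in>space \<nu>. g x < t} \<in> sets \<nu>" for t using gm by measurable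
  have mono: "Psi N' \<le> Psi N" if "0 < N" "N \<le> N'" for N N'
    unfolding Psi_def using that
    by (intro integral_mono Gi) (auto simp: G_def indicator_def)
  define c0 where "c0 = 1 + 2 * b / a"
  define r where "r = 2 * c0"
  define M where "M = N0 / 2"
  define t where "t j = M / r ^ j" for j :: nat
  have c0: "c0 > 1" using a b by (simp add: c0_def)
  have r: "r > 2" using c0 by (simp add: r_def)
  have M: "M > 0" "M < N0" using N0 by (auto simp: M_def)
  have tpos: "t j > 0" for j using M r by (simp add: t_def)
  have tle: "t j \<le> M" for j using M r by (simp add: t_def divide_le_eq)
  have tS: "t j = r * t (Suc j)" for j using r by (simp add: t_def)
  have tmono: "t (Suc j) \<le> t j" for j
  proof -
    have "1 * t (Suc j) \<le> r * t (Suc j)" using r tpos[of "Suc j"] by (intro mult_right_mono) auto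
    then show ?thesis using tS[of j] by simp
  qed
  define U where "U = b * r powr m"
  define L where "L = a * 2 powr (-m) - b * r powr (-m)"
  have Lpos: "L > 0"
  proof -
    have "r powr (-m) = 2 powr (-m) * c0 powr (-m)" unfolding r_def using c0
      by (simp add: powr_mult)
    moreover have "c0 powr (-m) \<le> c0 powr (-1)" using c0 m by (intro powr_mono) auto
    moreover have "c0 powr (-1) = 1 / c0" using c0 by (simp add: powr_minus_divide)
    ultimately have "b * c0 powr (-m) \<le> b / c0" using b
      by (metis mult_left_mono less_le times_divide_eq_right mult_1_right)
    then have "b * r powr (-m) \<le> 2 powr (-m) * (b / c0)"
      using \<open>r powr (-m) = _\<close> mult_left_mono[OF \<open>b * c0 powr (-m) \<le> b / c0\<close>, of "2 powr (-m)"]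
      by (simp add: mult.left_commute)
    moreover have "b / c0 < a" using a b c0 by (simp add: c0_def field_simps add_pos_pos)
    then have "2 powr (-m) * (b / c0) < 2 powr (-m) * a" by (intro mult_strict_left_mono) auto
    ultimately show ?thesis unfolding L_def by (simp add: mult.commute)
  qed
  have base: "Psi (t 0) \<le> M powr (-m)"
  proof -
    have "Psi (t 0) \<le> integral\<^sup>L \<nu> (\<lambda>x. M powr (-m))"
      unfolding Psi_def using Gbd[of M] M by (intro integral_mono Gi) (auto simp: t_def)
    then show ?thesis by (simp add: prob_space)
  qed
  have ustep: "Psi (t (Suc n)) \<le> Psi (t n) + U" for n
  proof -
    have "Psi (t (Suc n)) \<le> integral\<^sup>L \<nu> (\<lambda>x. G (t n) x + t (Suc n) powr (-m) * indicator {x\<in>space \<nu>. g x \<le> t n} x)"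
      unfolding Psi_def
    proof (intro integral_mono Gi tpos Bochner_Integration.integrable_add indi Sle)
      fix x assume x: "x \<in> space \<nu>"
      show "G (t (Suc n)) x \<le> G (t n) x + t (Suc n) powr (-m) * indicator {x\<in>space \<nu>. g x \<le> t n} x"
      proof (cases "t n \<le> g x")
        case True
        then show ?thesis using tS[of n] tpos[of "Suc n"] r x by (auto simp: G_def indicator_def)
      next
        case False
        then show ?thesis using x tpos[of "Suc n"] m
          by (auto simp: G_def indicator_def intro!: powr_mono2')
      qed
    qed
    also have "\<dots> = Psi (t n) + t (Suc n) powr (-m) * F (t n)"
      unfolding Psi_def F_def using Sle
      by (subst Bochner_Integration.integral_add) (auto intro!: Gi tpos indi indint simp: Int_absorb2 sets.sets_into_space)
    also have "F (t n) \<le> b * t n powr m" unfolding F_def using Fb[of "t n"] tpos[of n] order.strict_trans1[OF tle[of n] M(2)] by blast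
    then have "t (Suc n) powr (-m) * F (t n) \<le> t (Suc n) powr (-m) * (b * t n powr m)"
      by (intro mult_left_mono) auto
    also have "t (Suc n) powr (-m) * (b * t n powr m) = U"
    proof -
      have "t n powr m = r powr m * t (Suc n) powr m" using tS[of n] r tpos[of "Suc n"]
        by (simp add: powr_mult)
      moreover have "t (Suc n) powr (-m) * t (Suc n) powr m = 1" using tpos[of "Suc n"]
        by (simp add: powr_minus field_simps)
      ultimately show ?thesis unfolding U_def by (simp add: algebra_simps)
    qed
    finally show ?thesis by simp
  qed
  have lstep: "Psi (t n) + L \<le> Psi (t (Suc n))" for n
  proof -
    define D where "D = {x\<in>space \<nu>. g x < t n} - {x\<in>space \<nu>. g x < t (Suc n)}"
    have Dm: "D \<in> sets \<nu>" unfolding D_def using Slt by auto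
    have "integral\<^sup>L \<nu> (\<lambda>x. G (t n) x + t n powr (-m) * indicator D x) \<le> Psi (t (Suc n))"
      unfolding Psi_def
    proof (intro integral_mono Gi tpos Bochner_Integration.integrable_add indi Dm)
      fix x assume x: "x \<in> space \<nu>"
      show "G (t n) x + t n powr (-m) * indicator D x \<le> G (t (Suc n)) x"
      proof (cases "t n \<le> g x")
        case True
        then show ?thesis using tmono[of n] x by (auto simp: G_def indicator_def D_def)
      next
        case False
        then show ?thesis using x tpos[of "Suc n"] tpos[of n] m
          by (auto simp: G_def indicator_def D_def intro!: powr_mono2')
      qed
    qed
    moreover have "integral\<^sup>L \<nu> (\<lambda>x. G (t n) x + t n powr (-m) * indicator D x) = Psi (t n) + t n powr (-m) * measure \<nu> D"
      unfolding Psi_def using Dm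
      by (subst Bochner_Integration.integral_add) (auto intro!: Gi tpos indi indint simp: Int_absorb2 sets.sets_into_space)
    moreover have "L \<le> t n powr (-m) * measure \<nu> D"
    proof -
      have sub: "{x\<in>space \<nu>. g x < t (Suc n)} \<subseteq> {x\<in>space \<nu>. g x < t n}"
        using tmono[of n] by auto
      have mD: "measure \<nu> D = Fs (t n) - Fs (t (Suc n))"
        unfolding D_def Fs_def using Slt sub by (intro finite_measure_Diff) auto
      have "a * (t n / 2) powr m \<le> F (t n / 2)" unfolding F_def
        using Fb[of "t n / 2"] tpos[of n] tle[of n] M by auto
      also have "F (t n / 2) \<le> Fs (t n)" unfolding F_def Fs_def
        using tpos[of n] by (intro finite_measure_mono Slt) auto
      finally have 1: "a * (t n / 2) powr m \<le> Fs (t n)" .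
      have "Fs (t (Suc n)) \<le> F (t (Suc n))" unfolding F_def Fs_def
        by (intro finite_measure_mono Sle) auto
      also have "\<dots> \<le> b * t (Suc n) powr m" unfolding F_def
        using Fb[of "t (Suc n)"] tpos[of "Suc n"] tle[of "Suc n"] M by auto
      finally have 2: "Fs (t (Suc n)) \<le> b * t (Suc n) powr m" .
      have e1: "t n powr (-m) * (t n / 2) powr m = 2 powr (-m)"
        using tpos[of n] by (simp add: powr_divide powr_minus field_simps)
      have e2: "t n powr (-m) * t (Suc n) powr m = r powr (-m)"
      proof -
        have "t n powr (-m) = r powr (-m) * t (Suc n) powr (-m)" using tS[of n] r tpos[of "Suc n"]
          by (simp add: powr_mult)
        moreover have "t (Suc n) powr (-m) * t (Suc n) powr m = 1" using tpos[of "Suc n"]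
          by (simp add: powr_minus field_simps)
        ultimately show ?thesis by (simp add: algebra_simps)
      qed
      have "L = t n powr (-m) * (a * (t n / 2) powr m) - t n powr (-m) * (b * t (Suc n) powr m)"
        unfolding L_def using e1 e2 by (simp add: algebra_simps)
      also have "\<dots> \<le> t n powr (-m) * Fs (t n) - t n powr (-m) * Fs (t (Suc n))"
        using 1 2 by (intro diff_mono mult_left_mono) auto
      finally show ?thesis using mD by (simp add: right_diff_distrib)
    qed
    ultimately show ?thesis by linarith
  qed
  have Psinn: "Psi N \<ge> 0" for N unfolding Psi_def by (intro integral_nonneg_AE) (auto intro: Gnn)
  have upper: "Psi (t n) \<le> real n * U + M powr (-m)" for n
  proof (induction n)
    case 0 then show ?case using base by simp
  next
    case (Suc n) then show ?case using ustep[of n] by (simp add: algebra_simps)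
  qed
  have lower: "real n * L \<le> Psi (t n)" for n
  proof (induction n)
    case 0 then show ?case using Psinn by simp
  next
    case (Suc n) then show ?case using lstep[of n] by (simp add: algebra_simps)
  qed
  have lnr: "ln r > 0" using r by simp
  define A where "A = L / ln r"
  define B where "B = U / ln r"
  define D1 where "D1 = L * ln M / ln r - L"
  define D2 where "D2 = U * ln M / ln r + U + M powr (-m)"
  have Upos: "U > 0" using b r by (simp add: U_def)
  have main: "- A * ln N + D1 \<le> Psi N \<and> Psi N \<le> - B * ln N + D2" if N: "0 < N" "N \<le> M" for N
  proof -
    define x where "x = (ln M - ln N) / ln r"
    have x0: "x \<ge> 0" using N M lnr by (simp add: x_def)
    define n where "n = nat \<lfloor>x\<rfloor>"
    have n1: "real n \<le> x" "x < real n + 1" using x0 unfolding n_def by linarith+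
    have lnt: "ln (t j) = ln M - real j * ln r" for j
      using M r by (simp add: t_def ln_div ln_realpow)
    have "N \<le> t n"
    proof -
      have "real n * ln r \<le> ln M - ln N" using n1 lnr unfolding x_def by (simp add: le_divide_eq)
      then have "ln N \<le> ln (t n)" using lnt by simp
      then show ?thesis using N tpos by simp
    qed
    have "t (Suc n) \<le> N"
    proof -
      have "ln M - ln N \<le> real (Suc n) * ln r" using n1 lnr unfolding x_def by (simp add: divide_less_eq algebra_simps)
      then have "ln (t (Suc n)) \<le> ln N" using lnt[of "Suc n"] by simp
      then show ?thesis using N tpos by simp
    qed
    have "- A * ln N + D1 = L * (x - 1)" unfolding A_def D1_def x_def using lnr
      by (simp add: field_simps)
    also have "\<dots> \<le> real n * L" using mult_left_mono[of x "real n + 1" L] n1 Lpos by (simp add: algebra_simps)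
    also have "\<dots> \<le> Psi (t n)" by (rule lower)
    also have "\<dots> \<le> Psi N" using \<open>N \<le> t n\<close> N by (intro mono)
    finally have lo: "- A * ln N + D1 \<le> Psi N" .
    have "Psi N \<le> Psi (t (Suc n))" using \<open>t (Suc n) \<le> N\<close> tpos by (intro mono)
    also have "\<dots> \<le> real (Suc n) * U + M powr (-m)" by (rule upper)
    also have "\<dots> \<le> (x + 1) * U + M powr (-m)" using n1 Upos by simp
    also have "\<dots> = - B * ln N + D2" unfolding B_def D2_def x_def using lnr
      by (simp add: field_simps)
    finally show ?thesis using lo by simp
  qed
  show ?thesis
    apply (rule exI[of _ M], rule exI[of _ A], rule exI[of _ B], rule exI[of _ D1], rule exI[of _ D2])
    using M main Lpos Upos lnr unfolding A_def B_def Psi_def G_def by auto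
qed


theorem mainTheorem12:
  fixes P :: "'a::metric_space set" and i :: "'a \<Rightarrow> 'a \<Rightarrow> real" and \<nu> :: "'a measure"
    and g h :: nat and \<zeta> :: 'a and \<xi> :: "nat \<Rightarrow> 'a" and N0 a b :: real
  assumes "g \<ge> 2" and "h = 6 * g - 6"
    and "pmf_intersection_data P i \<nu>"
    and "\<zeta> \<in> P" and "\<And>k. \<xi> k \<in> P" and "\<xi> \<longlonglongrightarrow> \<zeta>"
    and "N0 > 0" and "a > 0" and "b > 0"
    and "\<And>k N. 0 < N \<Longrightarrow> N \<le> N0 \<Longrightarrow>
           a * N powr (real h / 2) \<le> measure \<nu> {\<eta> \<in> P. i \<eta> (\<xi> k) \<le> N} \<and>
           measure \<nu> {\<eta> \<in> P. i \<eta> (\<xi> k) \<le> N} \<le> b * N powr (real h / 2)"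
  shows "\<exists>N1 A B D1 D2. 0 < N1 \<and> N1 \<le> N0 \<and> A > 0 \<and> B > 0 \<and>
           (\<forall>N. 0 < N \<and> N \<le> N1 \<longrightarrow>
              - A * ln N + D1 \<le> Psi_ge \<nu> i h \<zeta> N \<and>
              Psi_ge \<nu> i h \<zeta> N \<le> - B * ln N + D2)"
  proof -
  have m1: "real h / 2 \<ge> 1" using assms(1,2) by simp
  from assms(3) have ps: "prob_space \<nu>" and sp: "space \<nu> = P"
    and st: "sets \<nu> = sets (restrict_space borel P)"
    and cont: "continuous_on (P \<times> P) (\<lambda>(x, y). i x y)"
    and sym: "\<forall>x\<in>P. \<forall>y\<in>P. i x y = i y x" and nn: "\<forall>x\<in>P. \<forall>y\<in>P. 0 \<le> i x y"
    unfolding pmf_intersection_data_def by auto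
  define gf where "gf \<eta> = i \<eta> \<zeta>" for \<eta>
  have "continuous_on P gf" unfolding gf_def
    by (rule continuous_on_compose2[OF cont, of _ "\<lambda>\<eta>. (\<eta>, \<zeta>)", simplified])
       (auto intro!: continuous_intros simp: assms(4))
  then have gm: "gf \<in> borel_measurable \<nu>"
    using borel_measurable_continuous_on_restrict measurable_cong_sets st by blast
  have gnn: "\<And>x. x \<in> space \<nu> \<Longrightarrow> 0 \<le> gf x" using nn assms(4) sp by (simp add: gf_def)
  have Fb: "a * t powr (real h / 2) \<le> measure \<nu> {x\<in>space \<nu>. gf x \<le> t} \<and>
      measure \<nu> {x\<in>space \<nu>. gf x \<le> t} \<le> b * t powr (real h / 2)" if "0 < t" "t < N0" for t
    using Fbd_lemma[OF assms(3) assms(4) assms(5) assms(6), of "real h / 2" N0 a b t] assms(10) m1 that sp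
    unfolding gf_def by auto
  obtain N1 A B D1 D2 where res: "0 < N1 \<and> N1 \<le> N0 \<and> A > 0 \<and> B > 0 \<and>
           (\<forall>N. 0 < N \<and> N \<le> N1 \<longrightarrow>
              - A * ln N + D1 \<le> (\<integral>x. indicator {x\<in>space \<nu>. N \<le> gf x} x * gf x powr (-(real h / 2)) \<partial>\<nu>) \<and>
              (\<integral>x. indicator {x\<in>space \<nu>. N \<le> gf x} x * gf x powr (-(real h / 2)) \<partial>\<nu>) \<le> - B * ln N + D2)"
    using psi_bounds[OF ps gm gnn m1 assms(8,9,7) Fb] by blast
  have eq: "Psi_ge \<nu> i h \<zeta> N = (\<integral>x. indicator {x\<in>space \<nu>. N \<le> gf x} x * gf x powr (-(real h / 2)) \<partial>\<nu>)" for N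
    unfolding Psi_ge_def
  proof (rule Bochner_Integration.integral_cong[OF refl])
    fix x assume x: "x \<in> space \<nu>"
    then have "i \<zeta> x = gf x" using sym assms(4) sp by (simp add: gf_def)
    then show "indicator {\<eta> \<in> space \<nu>. N \<le> i \<zeta> \<eta>} x * i \<zeta> x powr - (real h / 2) =
      indicator {x \<in> space \<nu>. N \<le> gf x} x * gf x powr - (real h / 2)"
      using x by (simp add: indicator_def)
  qed
  show ?thesis using res unfolding eq by blast
qed

end
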